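(* The intuitionistic modal logic $\mathsf{mHC}$ is canonical and has the finite model property.
   Context: $\mathsf{mHC}$ is the smallest set of formulas (built from variables, $\bot,\to,\wedge,\vee,\Box$) containing all axioms of intuitionistic propositional logic, $\Box(A\to B)\to(\Box A\to\Box B)$, $A\to\Box A$ and $\Box A\to((B\to A)\vee B)$, closed under modus ponens, necessitation and substitution. Kripke semantics: frames $(W,\unlhd,\prec)$ with $\unlhd$ a partial order, $\prec$ a relation such that $w\unlhd v\prec x$ implies $w\prec x$; valuations into $\unlhd$-upsets; $\Box A=\{w\mid\forall x(w\prec x\Rightarrow x\in A)\}$. Canonical means the logic is valid in its canonical frame (prime theories of the logic ordered by inclusion, with $\Gamma\prec\Delta$ iff $\{A\mid\Box A\in\Gamma\}\subseteq\Delta$). The finite model property means every non-theorem fails in some finite frame validating the logic. *)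

theory Defs
  imports Main
begin

datatype fm = Var nat | Bot | Imp fm fm | Conj fm fm | Disj fm fm | Box fm

fun subst :: "(nat \<Rightarrow> fm) \<Rightarrow> fm \<Rightarrow> fm" where
  "subst s (Var p) = s p"
| "subst s Bot = Bot"
| "subst s (Imp A B) = Imp (subst s A) (subst s B)"
| "subst s (Conj A B) = Conj (subst s A) (subst s B)"
| "subst s (Disj A B) = Disj (subst s A) (subst s B)"
| "subst s (Box A) = Box (subst s A)"

inductive ipc_axiom :: "fm \<Rightarrow> bool" where
  "ipc_axiom (Imp A (Imp B A))"
| "ipc_axiom (Imp (Imp A (Imp B C)) (Imp (Imp A B) (Imp A C)))"
| "ipc_axiom (Imp (Conj A B) A)"
| "ipc_axiom (Imp (Conj A B) B)"
| "ipc_axiom (Imp A (Imp B (Conj A B)))"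
| "ipc_axiom (Imp A (Disj A B))"
| "ipc_axiom (Imp B (Disj A B))"
| "ipc_axiom (Imp (Imp A C) (Imp (Imp B C) (Imp (Disj A B) C)))"
| "ipc_axiom (Imp Bot A)"

inductive_set mHC :: "fm set" where
  ipc: "ipc_axiom A \<Longrightarrow> A \<in> mHC"
| K: "Imp (Box (Imp A B)) (Imp (Box A) (Box B)) \<in> mHC"
| box_intro: "Imp A (Box A) \<in> mHC"
| HC: "Imp (Box A) (Disj (Imp B A) B) \<in> mHC"
| MP: "A \<in> mHC \<Longrightarrow> Imp A B \<in> mHC \<Longrightarrow> B \<in> mHC"
| Nec: "A \<in> mHC \<Longrightarrow> Box A \<in> mHC"
| Subst: "A \<in> mHC \<Longrightarrow> subst s A \<in> mHC"

definition frame :: "'w set \<Rightarrow> ('w \<Rightarrow> 'w \<Rightarrow> bool) \<Rightarrow> ('w \<Rightarrow> 'w \<Rightarrow> bool) \<Rightarrow> bool" where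
  "frame W le R \<longleftrightarrow>
     (\<forall>w\<in>W. le w w) \<and>
     (\<forall>u\<in>W. \<forall>v\<in>W. \<forall>w\<in>W. le u v \<longrightarrow> le v w \<longrightarrow> le u w) \<and>
     (\<forall>u\<in>W. \<forall>v\<in>W. le u v \<longrightarrow> le v u \<longrightarrow> u = v) \<and>
     (\<forall>w\<in>W. \<forall>v\<in>W. \<forall>x\<in>W. le w v \<longrightarrow> R v x \<longrightarrow> R w x)"

definition upset :: "'w set \<Rightarrow> ('w \<Rightarrow> 'w \<Rightarrow> bool) \<Rightarrow> 'w set \<Rightarrow> bool" where
  "upset W le X \<longleftrightarrow> X \<subseteq> W \<and> (\<forall>w\<in>X. \<forall>v\<in>W. le w v \<longrightarrow> v \<in> X)"

definition valuation :: "'w set \<Rightarrow> ('w \<Rightarrow> 'w \<Rightarrow> bool) \<Rightarrow> (nat \<Rightarrow> 'w set) \<Rightarrow> bool" where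
  "valuation W le V \<longleftrightarrow> (\<forall>p. upset W le (V p))"

fun sem :: "'w set \<Rightarrow> ('w \<Rightarrow> 'w \<Rightarrow> bool) \<Rightarrow> ('w \<Rightarrow> 'w \<Rightarrow> bool) \<Rightarrow> (nat \<Rightarrow> 'w set) \<Rightarrow> fm \<Rightarrow> 'w set" where
  "sem W le R V (Var p) = V p"
| "sem W le R V Bot = {}"
| "sem W le R V (Imp A B) =
     {w\<in>W. \<forall>v\<in>W. le w v \<longrightarrow> v \<in> sem W le R V A \<longrightarrow> v \<in> sem W le R V B}"
| "sem W le R V (Conj A B) = sem W le R V A \<inter> sem W le R V B"
| "sem W le R V (Disj A B) = sem W le R V A \<union> sem W le R V B"
| "sem W le R V (Box A) = {w\<in>W. \<forall>x\<in>W. R w x \<longrightarrow> x \<in> sem W le R V A}"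

definition valid_in :: "fm set \<Rightarrow> 'w set \<Rightarrow> ('w \<Rightarrow> 'w \<Rightarrow> bool) \<Rightarrow> ('w \<Rightarrow> 'w \<Rightarrow> bool) \<Rightarrow> bool" where
  "valid_in L W le R \<longleftrightarrow> (\<forall>V. valuation W le V \<longrightarrow> (\<forall>A\<in>L. sem W le R V A = W))"

definition theory_of :: "fm set \<Rightarrow> fm set \<Rightarrow> bool" where
  "theory_of L \<Gamma> \<longleftrightarrow> L \<subseteq> \<Gamma> \<and> (\<forall>A B. A \<in> \<Gamma> \<longrightarrow> Imp A B \<in> \<Gamma> \<longrightarrow> B \<in> \<Gamma>)"

definition prime_theory :: "fm set \<Rightarrow> fm set \<Rightarrow> bool" where
  "prime_theory L \<Gamma> \<longleftrightarrow> theory_of L \<Gamma> \<and> Bot \<notin> \<Gamma> \<and>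
     (\<forall>A B. Disj A B \<in> \<Gamma> \<longrightarrow> A \<in> \<Gamma> \<or> B \<in> \<Gamma>)"

definition can_W :: "fm set \<Rightarrow> fm set set" where
  "can_W L = {\<Gamma>. prime_theory L \<Gamma>}"

definition can_le :: "fm set \<Rightarrow> fm set \<Rightarrow> bool" where
  "can_le \<Gamma> \<Delta> \<longleftrightarrow> \<Gamma> \<subseteq> \<Delta>"

definition can_R :: "fm set \<Rightarrow> fm set \<Rightarrow> bool" where
  "can_R \<Gamma> \<Delta> \<longleftrightarrow> {A. Box A \<in> \<Gamma>} \<subseteq> \<Delta>"

definition canonical :: "fm set \<Rightarrow> bool" where
  "canonical L \<longleftrightarrow> valid_in L (can_W L) can_le can_R"

text \<open>Finite frames are taken with worlds drawn from \<open>nat\<close> (any finite frame is isomorphic to one).\<close>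
definition fmp :: "fm set \<Rightarrow> bool" where
  "fmp L \<longleftrightarrow> (\<forall>A. A \<notin> L \<longrightarrow>
     (\<exists>(W::nat set) le R V w. finite W \<and> frame W le R \<and> valid_in L W le R \<and>
        valuation W le V \<and> w \<in> W \<and> w \<notin> sem W le R V A))"

end

theory Submission
  imports Defs
begin

definition mframe :: "'w set \<Rightarrow> ('w \<Rightarrow> 'w \<Rightarrow> bool) \<Rightarrow> ('w \<Rightarrow> 'w \<Rightarrow> bool) \<Rightarrow> bool" where
  "mframe W le R \<longleftrightarrow>
     (\<forall>w\<in>W. le w w) \<and>
     (\<forall>u\<in>W. \<forall>v\<in>W. \<forall>w\<in>W. le u v \<longrightarrow> le v w \<longrightarrow> le u w) \<and>
     (\<forall>w\<in>W. \<forall>v\<in>W. \<forall>x\<in>W. le w v \<longrightarrow> R v x \<longrightarrow> R w x) \<and>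
     (\<forall>w\<in>W. \<forall>x\<in>W. R w x \<longrightarrow> le w x) \<and>
     (\<forall>w\<in>W. \<forall>v\<in>W. le w v \<longrightarrow> w = v \<or> R w v)"

lemma sem_sub: "valuation W le V \<Longrightarrow> sem W le R V A \<subseteq> W"
  by (induction A) (auto simp: valuation_def upset_def)

lemma sem_up:
  assumes "mframe W le R" "valuation W le V"
  shows "upset W le (sem W le R V A)"
proof (induction A)
  case (Var x)
  then show ?case using assms by (simp add: valuation_def)
next
  case Bot
  then show ?case by (simp add: upset_def)
next
  case (Imp A1 A2)
  have tr: "\<And>u v w. u \<in> W \<Longrightarrow> v \<in> W \<Longrightarrow> w \<in> W \<Longrightarrow> le u v \<Longrightarrow> le v w \<Longrightarrow> le u w"
    using assms(1) unfolding mframe_def by blast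
  show ?case unfolding upset_def
  proof (intro conjI ballI impI)
    show "sem W le R V (Imp A1 A2) \<subseteq> W" by auto
  next
    fix w v assume w: "w \<in> sem W le R V (Imp A1 A2)" and v: "v \<in> W" "le w v"
    show "v \<in> sem W le R V (Imp A1 A2)"
    proof (simp only: sem.simps, intro CollectI conjI ballI impI)
      fix u assume "u \<in> W" "le v u" "u \<in> sem W le R V A1"
      moreover have "le w u" using tr[of w v u] w v \<open>u \<in> W\<close> \<open>le v u\<close> by simp
      ultimately show "u \<in> sem W le R V A2" using w by simp
    qed fact
  qed
next
  case (Conj A1 A2)
  then show ?case by (auto simp: upset_def)
next
  case (Disj A1 A2)
  then show ?case by (auto simp: upset_def)
next
  case (Box A)
  have rr: "\<And>w v x. w \<in> W \<Longrightarrow> v \<in> W \<Longrightarrow> x \<in> W \<Longrightarrow> le w v \<Longrightarrow> R v x \<Longrightarrow> R w x"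
    using assms(1) unfolding mframe_def by blast
  show ?case unfolding upset_def
  proof (intro conjI ballI impI)
    show "sem W le R V (Box A) \<subseteq> W" by auto
  next
    fix w v assume w: "w \<in> sem W le R V (Box A)" and v: "v \<in> W" "le w v"
    show "v \<in> sem W le R V (Box A)"
    proof (simp only: sem.simps, intro CollectI conjI ballI impI)
      fix u assume "u \<in> W" "R v u"
      moreover have "R w u" using rr[of w v u] w v \<open>u \<in> W\<close> \<open>R v u\<close> by simp
      ultimately show "u \<in> sem W le R V A" using w by simp
    qed fact
  qed
qed

lemma sem_subst: "sem W le R V (subst s A) = sem W le R (\<lambda>p. sem W le R V (s p)) A"
  by (induction A) auto

lemma semI: "w \<in> W \<Longrightarrow> (\<And>v. v \<in> W \<Longrightarrow> le w v \<Longrightarrow> v \<in> sem W le R V A \<Longrightarrow> v \<in> sem W le R V B)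
   \<Longrightarrow> w \<in> sem W le R V (Imp A B)" by simp
lemma semE: "w \<in> sem W le R V (Imp A B) \<Longrightarrow> v \<in> W \<Longrightarrow> le w v \<Longrightarrow> v \<in> sem W le R V A \<Longrightarrow> v \<in> sem W le R V B"
  by simp
lemma semW: "w \<in> sem W le R V (Imp A B) \<Longrightarrow> w \<in> W" by simp
lemma boxI: "w \<in> W \<Longrightarrow> (\<And>x. x \<in> W \<Longrightarrow> R w x \<Longrightarrow> x \<in> sem W le R V A) \<Longrightarrow> w \<in> sem W le R V (Box A)" by simp
lemma boxE: "w \<in> sem W le R V (Box A) \<Longrightarrow> x \<in> W \<Longrightarrow> R w x \<Longrightarrow> x \<in> sem W le R V A" by simp

locale mfl =
  fixes W le R V
  assumes mf: "mframe W le R" and val: "valuation W le V"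
begin
abbreviation "S \<equiv> sem W le R V"
lemma up: "x \<in> S B \<Longrightarrow> y \<in> W \<Longrightarrow> le x y \<Longrightarrow> y \<in> S B"
    using sem_up[OF mf val] unfolding upset_def by blast
lemma sub: "x \<in> S B \<Longrightarrow> x \<in> W" using sem_sub[OF val] by blast
lemma refl: "w \<in> W \<Longrightarrow> le w w" using mf unfolding mframe_def by blast
lemma trans: "u \<in> W \<Longrightarrow> v \<in> W \<Longrightarrow> w \<in> W \<Longrightarrow> le u v \<Longrightarrow> le v w \<Longrightarrow> le u w"
    using mf unfolding mframe_def by blast
lemma RR: "w \<in> W \<Longrightarrow> v \<in> W \<Longrightarrow> x \<in> W \<Longrightarrow> le w v \<Longrightarrow> R v x \<Longrightarrow> R w x"
    using mf unfolding mframe_def by blast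
lemma Rle: "w \<in> W \<Longrightarrow> x \<in> W \<Longrightarrow> R w x \<Longrightarrow> le w x"
    using mf unfolding mframe_def by blast
lemma hc: "w \<in> W \<Longrightarrow> v \<in> W \<Longrightarrow> le w v \<Longrightarrow> w = v \<or> R w v"
    using mf unfolding mframe_def by blast

lemma allW: "(\<And>w. w \<in> W \<Longrightarrow> w \<in> S A) \<Longrightarrow> S A = W" using sub by blast

lemma ax1: "S (Imp A (Imp B A)) = W"
proof (intro allW semI)
  fix w v u assume "v \<in> S A" "u \<in> W" "le v u"
  then show "u \<in> S A" by (rule up)
qed
lemma ax2: "S (Imp (Imp A (Imp B C)) (Imp (Imp A B) (Imp A C))) = W"
proof (intro allW semI)
  fix w v u x assume "w \<in> W" "v \<in> W" "le w v" "v \<in> S (Imp A (Imp B C))" "u \<in> W" "le v u"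
    "u \<in> S (Imp A B)" "x \<in> W" "le u x" "x \<in> S A"
  moreover have "le v x" using trans calculation by blast
  moreover have "x \<in> S B" using semE calculation refl by metis
  moreover have "x \<in> S (Imp B C)" using semE calculation by metis
  ultimately show "x \<in> S C" using semE refl by metis
qed
lemma ax3: "S (Imp (Conj A B) A) = W" by (intro allW semI) auto
lemma ax4: "S (Imp (Conj A B) B) = W" by (intro allW semI) auto
lemma ax5: "S (Imp A (Imp B (Conj A B))) = W"
proof (intro allW semI)
  fix w v u assume "v \<in> S A" "u \<in> W" "le v u" "u \<in> S B"
  then show "u \<in> S (Conj A B)" using up[of v A u] by simp
qed
lemma ax6: "S (Imp A (Disj A B)) = W" by (intro allW semI) auto
lemma ax7: "S (Imp B (Disj A B)) = W" by (intro allW semI) auto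
lemma ax8: "S (Imp (Imp A C) (Imp (Imp B C) (Imp (Disj A B) C))) = W"
proof (intro allW semI)
  fix w v u x assume "w \<in> W" "v \<in> W" "le w v" "v \<in> S (Imp A C)" "u \<in> W" "le v u"
    "u \<in> S (Imp B C)" "x \<in> W" "le u x" "x \<in> S (Disj A B)"
  moreover have "le v x" using trans calculation by blast
  ultimately show "x \<in> S C" using semE by auto
qed
lemma ax9: "S (Imp Bot A) = W" by (intro allW semI) auto
lemma axK: "S (Imp (Box (Imp A B)) (Imp (Box A) (Box B))) = W"
proof (intro allW semI boxI)
  fix w v u x assume "w \<in> W" "v \<in> W" "le w v" "v \<in> S (Box (Imp A B))" "u \<in> W" "le v u"
    "u \<in> S (Box A)" "x \<in> W" "R u x"
  moreover have "R v x" using RR calculation by blast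
  ultimately show "x \<in> S B" using semE boxE refl by metis
qed
lemma axbox: "S (Imp A (Box A)) = W"
proof (intro allW semI boxI)
  fix w v x assume "v \<in> W" "v \<in> S A" "x \<in> W" "R v x"
  then show "x \<in> S A" using up Rle by blast
qed
lemma axHC: "S (Imp (Box A) (Disj (Imp B A) B)) = W"
proof (intro allW semI)
  fix w v assume "w \<in> W" "v \<in> W" "le w v" "v \<in> S (Box A)"
  show "v \<in> S (Disj (Imp B A) B)"
  proof (cases "v \<in> S B")
    case False
    have "v \<in> S (Imp B A)"
    proof (rule semI)
      fix u assume "u \<in> W" "le v u" "u \<in> S B"
      then have "R v u" using hc \<open>v \<in> W\<close> False by metis
      then show "u \<in> S A" using boxE \<open>v \<in> S (Box A)\<close> \<open>u \<in> W\<close> by metis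
    qed fact
    then show ?thesis by simp
  qed simp
qed
end

lemma soundness:
  assumes mf: "mframe W le R"
  shows "A \<in> mHC \<Longrightarrow> valuation W le V \<Longrightarrow> sem W le R V A = W"
proof (induction A arbitrary: V rule: mHC.induct)
  case (ipc A)
  interpret mfl W le R V using mf ipc(2) by unfold_locales
  from ipc(1) show ?case
    by cases (simp_all only: ax1 ax2 ax3 ax4 ax5 ax6 ax7 ax8 ax9)
next
  case (K A B)
  interpret mfl W le R V using mf K by unfold_locales
  show ?case by (rule axK)
next
  case (box_intro A)
  interpret mfl W le R V using mf box_intro by unfold_locales
  show ?case by (rule axbox)
next
  case (HC A B)
  interpret mfl W le R V using mf HC by unfold_locales
  show ?case by (rule axHC)
next
  case (MP A B)
  interpret mfl W le R V using mf MP by unfold_locales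
  show ?case
  proof (rule allW)
    fix w assume "w \<in> W"
    moreover have "w \<in> S (Imp A B)" "w \<in> S A" using MP \<open>w \<in> W\<close> by auto
    ultimately show "w \<in> S B" using semE refl by metis
  qed
next
  case (Nec A)
  then show ?case by auto
next
  case (Subst A s)
  have "valuation W le (\<lambda>p. sem W le R V (s p))"
    using sem_up[OF mf Subst(3)] by (simp add: valuation_def)
  then show ?case using Subst by (simp add: sem_subst)
qed

lemma axI: "ipc_axiom A \<Longrightarrow> A \<in> mHC" by (rule mHC.ipc)
lemmas axs = ipc_axiom.intros[THEN axI]

lemma imp_refl: "Imp A A \<in> mHC"
proof -
  have 1: "Imp (Imp A (Imp (Imp A A) A)) (Imp (Imp A (Imp A A)) (Imp A A)) \<in> mHC" by (rule axs)
  have 2: "Imp A (Imp (Imp A A) A) \<in> mHC" by (rule axs)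
  have 3: "Imp A (Imp A A) \<in> mHC" by (rule axs)
  show ?thesis using mHC.MP[OF 3 mHC.MP[OF 2 1]] .
qed

abbreviation thy :: "fm set \<Rightarrow> bool" where "thy \<Gamma> \<equiv> theory_of mHC \<Gamma>"
abbreviation prime :: "fm set \<Rightarrow> bool" where "prime \<Gamma> \<equiv> prime_theory mHC \<Gamma>"

lemma thy_thm: "thy \<Gamma> \<Longrightarrow> A \<in> mHC \<Longrightarrow> A \<in> \<Gamma>" unfolding theory_of_def by blast
lemma thy_mp: "thy \<Gamma> \<Longrightarrow> A \<in> \<Gamma> \<Longrightarrow> Imp A B \<in> \<Gamma> \<Longrightarrow> B \<in> \<Gamma>" unfolding theory_of_def by blast
lemma prime_thy: "prime \<Gamma> \<Longrightarrow> thy \<Gamma>" unfolding prime_theory_def by blast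

definition plus :: "fm set \<Rightarrow> fm \<Rightarrow> fm set" where "plus \<Gamma> B = {D. Imp B D \<in> \<Gamma>}"

lemma plus_sup: assumes "thy \<Gamma>" shows "\<Gamma> \<subseteq> plus \<Gamma> B"
proof
  fix D assume "D \<in> \<Gamma>"
  moreover have "Imp D (Imp B D) \<in> \<Gamma>" by (rule thy_thm[OF assms axs(1)])
  ultimately show "D \<in> plus \<Gamma> B" unfolding plus_def using thy_mp[OF assms] by blast
qed

lemma plus_in: "thy \<Gamma> \<Longrightarrow> B \<in> plus \<Gamma> B"
  unfolding plus_def using thy_thm imp_refl by blast

lemma thy_plus: assumes "thy \<Gamma>" shows "thy (plus \<Gamma> B)"
  unfolding theory_of_def
proof (intro conjI allI impI)
  show "mHC \<subseteq> plus \<Gamma> B" using plus_sup[OF assms] thy_thm[OF assms] by blast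
next
  fix D E assume "D \<in> plus \<Gamma> B" "Imp D E \<in> plus \<Gamma> B"
  then have 1: "Imp B D \<in> \<Gamma>" "Imp B (Imp D E) \<in> \<Gamma>" unfolding plus_def by auto
  have "Imp (Imp B (Imp D E)) (Imp (Imp B D) (Imp B E)) \<in> \<Gamma>" by (rule thy_thm[OF assms axs(2)])
  then show "E \<in> plus \<Gamma> B" unfolding plus_def using 1 thy_mp[OF assms] by blast
qed

lemma thy_boxes: assumes "thy \<Gamma>" shows "thy {B. Box B \<in> \<Gamma>}"
  unfolding theory_of_def
proof (intro conjI allI impI)
  show "mHC \<subseteq> {B. Box B \<in> \<Gamma>}" using thy_thm[OF assms] mHC.Nec by blast
next
  fix D E assume "D \<in> {B. Box B \<in> \<Gamma>}" "Imp D E \<in> {B. Box B \<in> \<Gamma>}"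
  moreover have "Imp (Box (Imp D E)) (Imp (Box D) (Box E)) \<in> \<Gamma>" by (rule thy_thm[OF assms mHC.K])
  ultimately show "E \<in> {B. Box B \<in> \<Gamma>}" using thy_mp[OF assms] by blast
qed

lemma thy_mHC: "thy mHC" unfolding theory_of_def using mHC.MP by blast

lemma lindenbaum:
  assumes G: "thy \<Gamma>" and A: "A \<notin> \<Gamma>"
  shows "\<exists>\<Delta>. prime \<Delta> \<and> \<Gamma> \<subseteq> \<Delta> \<and> A \<notin> \<Delta>"
proof -
  define \<A> where "\<A> = {\<Delta>. thy \<Delta> \<and> \<Gamma> \<subseteq> \<Delta> \<and> A \<notin> \<Delta>}"
  have "\<forall>C\<in>chains \<A>. \<exists>U\<in>\<A>. \<forall>X\<in>C. X \<subseteq> U"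
  proof
    fix C assume C: "C \<in> chains \<A>"
    show "\<exists>U\<in>\<A>. \<forall>X\<in>C. X \<subseteq> U"
    proof (cases "C = {}")
      case True
      then show ?thesis using G A unfolding \<A>_def by auto
    next
      case False
      have CA: "C \<subseteq> \<A>" and ch: "\<forall>X\<in>C. \<forall>Y\<in>C. X \<subseteq> Y \<or> Y \<subseteq> X"
        using C unfolding chains_def chain_subset_def by auto
      have "thy (\<Union>C)"
        unfolding theory_of_def
      proof (intro conjI allI impI)
        show "mHC \<subseteq> \<Union>C" using False CA unfolding \<A>_def theory_of_def by blast
      next
        fix D E assume "D \<in> \<Union>C" "Imp D E \<in> \<Union>C"
        then obtain X Y where "X \<in> C" "Y \<in> C" "D \<in> X" "Imp D E \<in> Y" by blast
        then show "E \<in> \<Union>C" using ch CA unfolding \<A>_def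
          by (metis (no_types, lifting) UnionI mem_Collect_eq subset_iff thy_mp)
      qed
      moreover have "\<Gamma> \<subseteq> \<Union>C" "A \<notin> \<Union>C" using False CA unfolding \<A>_def by auto
      ultimately show ?thesis unfolding \<A>_def by blast
    qed
  qed
  from Zorn_Lemma2[OF this] obtain M where M: "M \<in> \<A>" and max: "\<forall>X\<in>\<A>. M \<subseteq> X \<longrightarrow> X = M"
    by blast
  have Mt: "thy M" "\<Gamma> \<subseteq> M" "A \<notin> M" using M unfolding \<A>_def by auto
  have key: "Imp B A \<in> M" if "B \<notin> M" for B
  proof (rule ccontr)
    assume "Imp B A \<notin> M"
    then have "plus M B \<in> \<A>" using thy_plus[OF Mt(1)] plus_sup[OF Mt(1)] Mt unfolding \<A>_def plus_def by auto
    then have "plus M B = M" using max plus_sup[OF Mt(1)] by blast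
    then show False using plus_in[OF Mt(1), of B] that by metis
  qed
  have "Bot \<notin> M"
  proof
    assume "Bot \<in> M"
    then show False using thy_mp[OF Mt(1) _ thy_thm[OF Mt(1) axs(9)]] Mt(3) by blast
  qed
  moreover have "B \<in> M \<or> C \<in> M" if "Disj B C \<in> M" for B C
  proof (rule ccontr)
    assume "\<not> (B \<in> M \<or> C \<in> M)"
    then have "Imp B A \<in> M" "Imp C A \<in> M" using key by auto
    moreover have "Imp (Imp B A) (Imp (Imp C A) (Imp (Disj B C) A)) \<in> M" by (rule thy_thm[OF Mt(1) axs(8)])
    ultimately have "A \<in> M" using thy_mp[OF Mt(1)] that by blast
    then show False using Mt by blast
  qed
  ultimately show ?thesis using Mt unfolding prime_theory_def by blast
qed

lemma thy_conj: assumes "thy \<Gamma>" shows "Conj A B \<in> \<Gamma> \<longleftrightarrow> A \<in> \<Gamma> \<and> B \<in> \<Gamma>"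
proof
  assume "Conj A B \<in> \<Gamma>"
  then show "A \<in> \<Gamma> \<and> B \<in> \<Gamma>"
    using thy_mp[OF assms _ thy_thm[OF assms axs(3)]] thy_mp[OF assms _ thy_thm[OF assms axs(4)]] by blast
next
  assume "A \<in> \<Gamma> \<and> B \<in> \<Gamma>"
  then show "Conj A B \<in> \<Gamma>"
    using thy_mp[OF assms _ thy_mp[OF assms _ thy_thm[OF assms axs(5)]]] by blast
qed

lemma prime_disj: assumes "prime \<Gamma>" shows "Disj A B \<in> \<Gamma> \<longleftrightarrow> A \<in> \<Gamma> \<or> B \<in> \<Gamma>"
proof
  assume "Disj A B \<in> \<Gamma>"
  then show "A \<in> \<Gamma> \<or> B \<in> \<Gamma>" using assms unfolding prime_theory_def by blast
next
  have t: "thy \<Gamma>" using prime_thy[OF assms] .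
  assume "A \<in> \<Gamma> \<or> B \<in> \<Gamma>"
  then show "Disj A B \<in> \<Gamma>"
    using thy_mp[OF t _ thy_thm[OF t axs(6)]] thy_mp[OF t _ thy_thm[OF t axs(7)]] by blast
qed

lemma prime_bot: "prime \<Gamma> \<Longrightarrow> Bot \<notin> \<Gamma>" unfolding prime_theory_def by blast

lemma canR_le: assumes "thy \<Gamma>" "{A. Box A \<in> \<Gamma>} \<subseteq> \<Delta>" shows "\<Gamma> \<subseteq> \<Delta>"
proof
  fix B assume "B \<in> \<Gamma>"
  then have "Box B \<in> \<Gamma>" using thy_mp[OF assms(1) _ thy_thm[OF assms(1) mHC.box_intro]] by blast
  then show "B \<in> \<Delta>" using assms(2) by blast
qed

lemma canHC: assumes "prime \<Gamma>" "thy \<Delta>" "\<Gamma> \<subseteq> \<Delta>" "\<Gamma> \<noteq> \<Delta>" shows "{A. Box A \<in> \<Gamma>} \<subseteq> \<Delta>"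
proof
  fix B assume "B \<in> {A. Box A \<in> \<Gamma>}"
  then have b: "Box B \<in> \<Gamma>" by simp
  obtain C where C: "C \<in> \<Delta>" "C \<notin> \<Gamma>" using assms(3,4) by blast
  have "Disj (Imp C B) C \<in> \<Gamma>"
    using thy_mp[OF prime_thy[OF assms(1)] b thy_thm[OF prime_thy[OF assms(1)] mHC.HC]] .
  then have "Imp C B \<in> \<Gamma>" using prime_disj[OF assms(1)] C by blast
  then show "B \<in> \<Delta>" using assms(3) C thy_mp[OF assms(2)] by blast
qed

lemma can_mframe: "mframe (can_W mHC) can_le can_R"
  unfolding mframe_def can_W_def can_le_def can_R_def
proof (intro conjI ballI impI)
  fix w x assume "w \<in> {\<Gamma>. prime \<Gamma>}" "x \<in> {\<Gamma>. prime \<Gamma>}" "{A. Box A \<in> w} \<subseteq> x"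
  then show "w \<subseteq> x" using canR_le prime_thy by auto
next
  fix w x assume "w \<in> {\<Gamma>. prime \<Gamma>}" "x \<in> {\<Gamma>. prime \<Gamma>}" "w \<subseteq> x"
  then show "w = x \<or> {A. Box A \<in> w} \<subseteq> x" using canHC prime_thy by auto
qed auto

lemma canonical_mHC: "canonical mHC"
  unfolding canonical_def valid_in_def using soundness[OF can_mframe] by blast

fun sub :: "fm \<Rightarrow> fm set" where
  "sub (Var p) = {Var p}"
| "sub Bot = {Bot}"
| "sub (Imp A B) = insert (Imp A B) (sub A \<union> sub B)"
| "sub (Conj A B) = insert (Conj A B) (sub A \<union> sub B)"
| "sub (Disj A B) = insert (Disj A B) (sub A \<union> sub B)"
| "sub (Box A) = insert (Box A) (sub A)"

lemma finite_sub: "finite (sub A)" by (induction A) auto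
lemma sub_self: "A \<in> sub A" by (cases A) auto
lemma sub_trans: "B \<in> sub A \<Longrightarrow> sub B \<subseteq> sub A" by (induction A) auto

definition fle :: "fm set \<Rightarrow> fm set \<Rightarrow> bool" where
  "fle S T \<longleftrightarrow> S \<subseteq> T \<and> (S = T \<or> {B. Box B \<in> S} \<subseteq> T)"
definition fR :: "fm set \<Rightarrow> fm set \<Rightarrow> bool" where
  "fR S T \<longleftrightarrow> fle S T \<and> {B. Box B \<in> S} \<subseteq> T"
definition fW :: "fm set \<Rightarrow> fm set set" where
  "fW \<Sigma> = {\<Gamma> \<inter> \<Sigma> | \<Gamma>. prime \<Gamma>}"
definition fV :: "fm set \<Rightarrow> nat \<Rightarrow> fm set set" where
  "fV \<Sigma> p = {S \<in> fW \<Sigma>. Var p \<in> S}"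

lemma f_mframe: "mframe (fW \<Sigma>) fle fR"
  unfolding mframe_def fle_def fR_def by auto

lemma f_frame: "frame (fW \<Sigma>) fle fR"
  unfolding frame_def fle_def fR_def by auto

lemma f_val: "valuation (fW \<Sigma>) fle (fV \<Sigma>)"
  unfolding valuation_def upset_def fV_def fle_def by auto

lemma truth:
  assumes cl: "\<forall>X\<in>\<Sigma>. sub X \<subseteq> \<Sigma>"
  shows "sub C \<subseteq> \<Sigma> \<Longrightarrow> prime \<Gamma> \<Longrightarrow> (\<Gamma> \<inter> \<Sigma> \<in> sem (fW \<Sigma>) fle fR (fV \<Sigma>) C) \<longleftrightarrow> C \<in> \<Gamma>"
proof (induction C arbitrary: \<Gamma>)
  case (Var p)
  then show ?case unfolding fV_def fW_def by auto
next
  case Bot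
  then show ?case using prime_bot by simp
next
  case (Imp C D)
  have GW: "\<Gamma> \<inter> \<Sigma> \<in> fW \<Sigma>" using Imp.prems unfolding fW_def by blast
  have CS: "Imp C D \<in> \<Sigma>" using Imp.prems by simp
  show ?case
  proof
    assume H: "\<Gamma> \<inter> \<Sigma> \<in> sem (fW \<Sigma>) fle fR (fV \<Sigma>) (Imp C D)"
    show "Imp C D \<in> \<Gamma>"
    proof (rule ccontr)
      assume N: "Imp C D \<notin> \<Gamma>"
      have t: "thy (plus \<Gamma> C)" using thy_plus prime_thy Imp.prems by blast
      have "D \<notin> plus \<Gamma> C" using N unfolding plus_def by simp
      then obtain \<Delta> where D: "prime \<Delta>" "plus \<Gamma> C \<subseteq> \<Delta>" "D \<notin> \<Delta>" using lindenbaum[OF t] by blast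
      have GD: "\<Gamma> \<subseteq> \<Delta>" using D plus_sup prime_thy Imp.prems by blast
      have CD: "C \<in> \<Delta>" using D plus_in prime_thy Imp.prems by blast
      have le: "fle (\<Gamma> \<inter> \<Sigma>) (\<Delta> \<inter> \<Sigma>)"
      proof (cases "\<Gamma> = \<Delta>")
        case True then show ?thesis unfolding fle_def by simp
      next
        case False
        have "{A. Box A \<in> \<Gamma>} \<subseteq> \<Delta>" using canHC[OF Imp.prems(2) prime_thy[OF D(1)] GD False] .
        moreover have "B \<in> \<Sigma>" if "Box B \<in> \<Sigma>" for B using cl that sub_self by fastforce
        ultimately show ?thesis using GD unfolding fle_def by blast
      qed
      have DW: "\<Delta> \<inter> \<Sigma> \<in> fW \<Sigma>" using D unfolding fW_def by blast
      have "\<Delta> \<inter> \<Sigma> \<in> sem (fW \<Sigma>) fle fR (fV \<Sigma>) C" using Imp.IH(1)[of \<Delta>] Imp.prems D CD by simp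
      then have "\<Delta> \<inter> \<Sigma> \<in> sem (fW \<Sigma>) fle fR (fV \<Sigma>) D" using H le DW by simp
      then have "D \<in> \<Delta>" using Imp.IH(2)[of \<Delta>] Imp.prems D by simp
      then show False using D by blast
    qed
  next
    assume H: "Imp C D \<in> \<Gamma>"
    show "\<Gamma> \<inter> \<Sigma> \<in> sem (fW \<Sigma>) fle fR (fV \<Sigma>) (Imp C D)"
      unfolding sem.simps
    proof (intro CollectI conjI GW ballI impI)
      fix T assume T: "T \<in> fW \<Sigma>" "fle (\<Gamma> \<inter> \<Sigma>) T" "T \<in> sem (fW \<Sigma>) fle fR (fV \<Sigma>) C"
      then obtain \<Delta> where D: "prime \<Delta>" "T = \<Delta> \<inter> \<Sigma>" unfolding fW_def by blast
      have "C \<in> \<Delta>" using Imp.IH(1)[of \<Delta>] Imp.prems D T by simp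
      moreover have "Imp C D \<in> \<Delta>" using T(2) D(2) H CS unfolding fle_def by blast
      ultimately have "D \<in> \<Delta>" using thy_mp prime_thy D by blast
      then show "T \<in> sem (fW \<Sigma>) fle fR (fV \<Sigma>) D" using Imp.IH(2)[of \<Delta>] Imp.prems D by simp
    qed
  qed
next
  case (Conj C D)
  then show ?case using thy_conj[OF prime_thy[OF Conj.prems(2)]] by simp
next
  case (Disj C D)
  then show ?case using prime_disj[OF Disj.prems(2)] by simp
next
  case (Box B)
  have GW: "\<Gamma> \<inter> \<Sigma> \<in> fW \<Sigma>" using Box.prems unfolding fW_def by blast
  have BS: "Box B \<in> \<Sigma>" using Box.prems by simp
  show ?case
  proof
    assume H: "\<Gamma> \<inter> \<Sigma> \<in> sem (fW \<Sigma>) fle fR (fV \<Sigma>) (Box B)"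
    show "Box B \<in> \<Gamma>"
    proof (rule ccontr)
      assume N: "Box B \<notin> \<Gamma>"
      have t: "thy {A. Box A \<in> \<Gamma>}" using thy_boxes prime_thy Box.prems by blast
      then obtain \<Delta> where D: "prime \<Delta>" "{A. Box A \<in> \<Gamma>} \<subseteq> \<Delta>" "B \<notin> \<Delta>"
        using lindenbaum[OF t] N by blast
      have GD: "\<Gamma> \<subseteq> \<Delta>" using canR_le prime_thy Box.prems D by blast
      have "B \<in> \<Sigma>" if "Box B \<in> \<Sigma>" for B using cl that sub_self by fastforce
      then have R: "fR (\<Gamma> \<inter> \<Sigma>) (\<Delta> \<inter> \<Sigma>)" using GD D unfolding fR_def fle_def by blast
      have DW: "\<Delta> \<inter> \<Sigma> \<in> fW \<Sigma>" using D unfolding fW_def by blast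
      have "\<Delta> \<inter> \<Sigma> \<in> sem (fW \<Sigma>) fle fR (fV \<Sigma>) B" using H R DW by simp
      then show False using Box.IH[of \<Delta>] Box.prems D by simp
    qed
  next
    assume H: "Box B \<in> \<Gamma>"
    show "\<Gamma> \<inter> \<Sigma> \<in> sem (fW \<Sigma>) fle fR (fV \<Sigma>) (Box B)"
      unfolding sem.simps
    proof (intro CollectI conjI GW ballI impI)
      fix T assume T: "T \<in> fW \<Sigma>" "fR (\<Gamma> \<inter> \<Sigma>) T"
      then obtain \<Delta> where D: "prime \<Delta>" "T = \<Delta> \<inter> \<Sigma>" unfolding fW_def by blast
      have "B \<in> \<Delta>" using T(2) D(2) H BS unfolding fR_def by blast
      then show "T \<in> sem (fW \<Sigma>) fle fR (fV \<Sigma>) B" using Box.IH[of \<Delta>] Box.prems D by simp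
    qed
  qed
qed

lemma finite_fW: "finite \<Sigma> \<Longrightarrow> finite (fW \<Sigma>)"
proof -
  assume "finite \<Sigma>"
  moreover have "fW \<Sigma> \<subseteq> Pow \<Sigma>" unfolding fW_def by auto
  ultimately show ?thesis by (meson finite_Pow_iff rev_finite_subset)
qed

lemma to_nat:
  fixes W :: "'a set"
  assumes fin: "finite W" and mf: "mframe W le R" and fr: "frame W le R" and val: "valuation W le V"
    and w: "w \<in> W" "w \<notin> sem W le R V A"
  shows "\<exists>(W'::nat set) le' R' V' w'. finite W' \<and> frame W' le' R' \<and> valid_in mHC W' le' R' \<and>
        valuation W' le' V' \<and> w' \<in> W' \<and> w' \<notin> sem W' le' R' V' A"
proof -
  obtain f :: "'a \<Rightarrow> nat" where inj: "inj_on f W" using finite_imp_inj_to_nat_seg[OF fin] by blast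
  define g where "g = the_inv_into W f"
  have gf: "\<And>x. x \<in> W \<Longrightarrow> g (f x) = x" using the_inv_into_f_f[OF inj] g_def by simp
  define W' where "W' = f ` W"
  define le' where "le' = (\<lambda>m n. le (g m) (g n))"
  define R' where "R' = (\<lambda>m n. R (g m) (g n))"
  define V' where "V' = (\<lambda>p. f ` V p)"
  have gW: "\<And>n. n \<in> W' \<Longrightarrow> g n \<in> W" using gf W'_def by auto
  have fg: "\<And>n. n \<in> W' \<Longrightarrow> f (g n) = n" using gf W'_def by auto
  have ballW': "\<And>P. (\<forall>m\<in>W'. P (g m)) \<longleftrightarrow> (\<forall>v\<in>W. P v)" using gf W'_def by auto
  have VW: "\<And>p. V p \<subseteq> W" using val unfolding valuation_def upset_def by blast
  have key: "n \<in> sem W' le' R' V' B \<longleftrightarrow> n \<in> W' \<and> g n \<in> sem W le R V B" for n B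
  proof (induction B arbitrary: n)
    case (Var p)
    show ?case
    proof
      assume "n \<in> sem W' le' R' V' (Var p)"
      then obtain x where "x \<in> V p" "n = f x" unfolding V'_def by auto
      moreover have "x \<in> W" using VW \<open>x \<in> V p\<close> by blast
      ultimately show "n \<in> W' \<and> g n \<in> sem W le R V (Var p)" using gf W'_def by simp
    next
      assume "n \<in> W' \<and> g n \<in> sem W le R V (Var p)"
      then show "n \<in> sem W' le' R' V' (Var p)" unfolding V'_def using fg by force
    qed
  next
    case (Imp B1 B2)
    have "n \<in> sem W' le' R' V' (Imp B1 B2) \<longleftrightarrow>
      n \<in> W' \<and> (\<forall>m\<in>W'. le (g n) (g m) \<longrightarrow> g m \<in> sem W le R V B1 \<longrightarrow> g m \<in> sem W le R V B2)"
      using Imp.IH le'_def by auto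
    also have "\<dots> \<longleftrightarrow> n \<in> W' \<and> (\<forall>v\<in>W. le (g n) v \<longrightarrow> v \<in> sem W le R V B1 \<longrightarrow> v \<in> sem W le R V B2)"
      using ballW'[of "\<lambda>v. le (g n) v \<longrightarrow> v \<in> sem W le R V B1 \<longrightarrow> v \<in> sem W le R V B2"] by simp
    finally show ?case using gW by auto
  next
    case (Box B)
    have "n \<in> sem W' le' R' V' (Box B) \<longleftrightarrow>
      n \<in> W' \<and> (\<forall>m\<in>W'. R (g n) (g m) \<longrightarrow> g m \<in> sem W le R V B)"
      using Box.IH R'_def by auto
    also have "\<dots> \<longleftrightarrow> n \<in> W' \<and> (\<forall>v\<in>W. R (g n) v \<longrightarrow> v \<in> sem W le R V B)"
      using ballW'[of "\<lambda>v. R (g n) v \<longrightarrow> v \<in> sem W le R V B"] by simp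
    finally show ?case using gW by auto
  qed auto
  have ginj: "\<And>u v. u \<in> W' \<Longrightarrow> v \<in> W' \<Longrightarrow> g u = g v \<Longrightarrow> u = v" using fg by metis
  have m1: "\<forall>w\<in>W. le w w" and m2: "\<forall>u\<in>W. \<forall>v\<in>W. \<forall>w\<in>W. le u v \<longrightarrow> le v w \<longrightarrow> le u w"
    and m3: "\<forall>w\<in>W. \<forall>v\<in>W. \<forall>x\<in>W. le w v \<longrightarrow> R v x \<longrightarrow> R w x"
    and m4: "\<forall>w\<in>W. \<forall>x\<in>W. R w x \<longrightarrow> le w x"
    and m5: "\<forall>w\<in>W. \<forall>v\<in>W. le w v \<longrightarrow> w = v \<or> R w v"
    using mf unfolding mframe_def by blast+
  have f3: "\<forall>u\<in>W. \<forall>v\<in>W. le u v \<longrightarrow> le v u \<longrightarrow> u = v" using fr unfolding frame_def by blast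
  have mf': "mframe W' le' R'"
    unfolding mframe_def le'_def R'_def
  proof (intro conjI ballI impI)
    fix w assume "w \<in> W'" then show "le (g w) (g w)" using m1 gW by blast
  next
    fix u v w assume "u \<in> W'" "v \<in> W'" "w \<in> W'" "le (g u) (g v)" "le (g v) (g w)"
    then show "le (g u) (g w)" using m2 gW by blast
  next
    fix u v w assume "u \<in> W'" "v \<in> W'" "w \<in> W'" "le (g u) (g v)" "R (g v) (g w)"
    then show "R (g u) (g w)" using m3 gW by blast
  next
    fix u w assume "u \<in> W'" "w \<in> W'" "R (g u) (g w)"
    then show "le (g u) (g w)" using m4 gW by blast
  next
    fix u w assume "u \<in> W'" "w \<in> W'" "le (g u) (g w)"
    then show "u = w \<or> R (g u) (g w)" using m5 gW ginj by blast
  qed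
  have fr': "frame W' le' R'"
    unfolding frame_def le'_def R'_def
  proof (intro conjI ballI impI)
    fix w assume "w \<in> W'" then show "le (g w) (g w)" using m1 gW by blast
  next
    fix u v w assume "u \<in> W'" "v \<in> W'" "w \<in> W'" "le (g u) (g v)" "le (g v) (g w)"
    then show "le (g u) (g w)" using m2 gW by blast
  next
    fix u v w assume "u \<in> W'" "v \<in> W'" "w \<in> W'" "le (g u) (g v)" "R (g v) (g w)"
    then show "R (g u) (g w)" using m3 gW by blast
  next
    fix u w assume "u \<in> W'" "w \<in> W'" "le (g u) (g w)" "le (g w) (g u)"
    then show "u = w" using f3 gW ginj by blast
  qed
  have val': "valuation W' le' V'"
    unfolding valuation_def upset_def
  proof (intro allI conjI ballI impI)
    fix p show "V' p \<subseteq> W'" using VW unfolding V'_def W'_def by auto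
  next
    fix p u v assume "u \<in> V' p" "v \<in> W'" "le' u v"
    then show "v \<in> V' p" using key[of u "Var p"] key[of v "Var p"] val gW
      unfolding le'_def valuation_def upset_def by auto
  qed
  have "valid_in mHC W' le' R'"
    unfolding valid_in_def using soundness[OF mf'] by blast
  moreover have "f w \<in> W'" "f w \<notin> sem W' le' R' V' A" using w key gf W'_def by auto
  moreover have "finite W'" using fin W'_def by simp
  ultimately show ?thesis using fr' val' by blast
qed

theorem corollary4p13:
  shows "canonical mHC \<and> fmp mHC"
proof
  show "canonical mHC" by (rule canonical_mHC)
  show "fmp mHC" unfolding fmp_def
  proof (intro allI impI)
    fix A assume A: "A \<notin> mHC"
    obtain \<Gamma> where G: "prime \<Gamma>" "A \<notin> \<Gamma>" using lindenbaum[OF thy_mHC A] by blast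
    have cl: "\<forall>X\<in>sub A. sub X \<subseteq> sub A" using sub_trans by blast
    have "\<Gamma> \<inter> sub A \<notin> sem (fW (sub A)) fle fR (fV (sub A)) A"
      using truth[OF cl order_refl G(1)] G(2) by simp
    moreover have "\<Gamma> \<inter> sub A \<in> fW (sub A)" using G unfolding fW_def by blast
    ultimately show "\<exists>(W::nat set) le R V w. finite W \<and> frame W le R \<and> valid_in mHC W le R \<and>
        valuation W le V \<and> w \<in> W \<and> w \<notin> sem W le R V A"
      using to_nat[OF finite_fW[OF finite_sub] f_mframe f_frame f_val] by blast
  qed
qed

end
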